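(* Let $S \subseteq \mathbb{R}^n$ be nonempty, closed and convex, let $F = (F_1,\dots,F_m)^\top \colon S \to \mathbb{R}^m$ with each $F_i$ convex (and continuous), let $\ell > 0$, and define \[ u_\ell(x) := \max_{y \in S} \min_{i = 1,\dots,m} \left\{F_i(x) - F_i(y) - \frac{\ell}{2}\|x - y\|^2\right\}, \quad x \in S. \] Then $u_\ell(x) \ge 0$ for all $x \in S$. Moreover, $x \in S$ is weakly Pareto optimal for $\min_{x\in S} F(x)$ if and only if $u_\ell(x) = 0$.
   Context: $\|\cdot\|$ is the Euclidean norm. For $u,v\in\mathbb{R}^m$, $u<v$ means $u_i<v_i$ for all $i$. A point $x^\ast \in S$ is weakly Pareto optimal for $\min_{x\in S} F(x)$ if there is no $x \in S$ with $F(x) < F(x^\ast)$. *)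

theory Defs
  imports "HOL-Analysis.Analysis"
begin

text \<open>Objectives are indexed by a finite (hence nonempty) type 'm, i.e. F = (F_i)_{i in 'm}.\<close>

definition weakly_pareto_optimal ::
    "'a set \<Rightarrow> ('m::finite \<Rightarrow> 'a \<Rightarrow> real) \<Rightarrow> 'a \<Rightarrow> bool" where
  "weakly_pareto_optimal S F x \<longleftrightarrow>
     x \<in> S \<and> \<not> (\<exists>y\<in>S. \<forall>i. F i y < F i x)"

text \<open>The merit function u_l(x) = max_{y in S} min_i (F_i x - F_i y - l/2 ||x - y||^2).
  The maximum is written as a supremum (it is attained under the hypotheses).\<close>

definition u_merit ::
    "'a::real_normed_vector set \<Rightarrow> ('m::finite \<Rightarrow> 'a \<Rightarrow> real) \<Rightarrow> real \<Rightarrow> 'a \<Rightarrow> real" where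
  "u_merit S F l x =
     (SUP y\<in>S. Min (range (\<lambda>i. F i x - F i y - l / 2 * (norm (x - y))\<^sup>2)))"

end

theory Submission
  imports Defs
begin

lemma growth_bound:
  fixes S :: "'n::real_normed_vector set" and f :: "'n \<Rightarrow> real"
  assumes "convex S" "convex_on S f" "continuous_on S f" "x \<in> S"
  shows "\<exists>r>0. \<forall>y\<in>S. f x - f y \<le> 1 + norm (y - x) / r"
proof -
  obtain d where d: "d > 0" "\<forall>x'\<in>S. dist x' x < d \<longrightarrow> dist (f x') (f x) < 1"
    using assms(3,4) unfolding continuous_on_iff by (meson zero_less_one)
  define r where "r = d / 2"
  have r: "r > 0" "r < d" using d by (auto simp: r_def)
  have "f x - f y \<le> 1 + norm (y - x) / r" if y: "y \<in> S" for y
  proof (cases "norm (y - x) < d")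
    case True
    then have "dist (f y) (f x) < 1" using d y by (simp add: dist_norm)
    then have "f x - f y < 1" by (simp add: dist_real_def)
    moreover have "norm (y - x) / r \<ge> 0" using r by simp
    ultimately show ?thesis by linarith
  next
    case False
    define D where "D = norm (y - x)"
    have D: "D \<ge> d" "D > 0" using False d by (auto simp: D_def)
    define t where "t = r / D"
    have t: "0 < t" "t < 1" using r D by (auto simp: t_def field_simps)
    define z where "z = (1 - t) *\<^sub>R x + t *\<^sub>R y"
    have zS: "z \<in> S" using assms(1) assms(4) y t unfolding z_def
      by (intro convexD) auto
    have "z - x = t *\<^sub>R (y - x)" by (simp add: z_def algebra_simps)
    then have "dist z x = t * D" using t by (simp add: dist_norm D_def)
    also have "\<dots> = r" using D by (simp add: t_def)
    finally have "dist z x < d" using r by simp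
    then have "dist (f z) (f x) < 1" using d zS by auto
    then have fz: "f z > f x - 1" by (simp add: dist_real_def)
    have "f z \<le> (1 - t) * f x + t * f y"
      using convex_onD[OF assms(2), of t x y] t assms(4) y by (simp add: z_def)
    with fz have "t * (f x - f y) < 1" by (simp add: algebra_simps)
    then have "f x - f y < 1 / t" using t by (simp add: field_simps)
    also have "1 / t = D / r" using r D by (simp add: t_def)
    finally show ?thesis by (simp add: D_def)
  qed
  with r show ?thesis by blast
qed

lemma bdd_merit:
  fixes S :: "'n::real_normed_vector set" and F :: "'m::finite \<Rightarrow> 'n \<Rightarrow> real"
  assumes "convex S" "\<And>i. convex_on S (F i)" "\<And>i. continuous_on S (F i)" "x \<in> S" "l > 0"
  shows "bdd_above ((\<lambda>y. Min (range (\<lambda>i. F i x - F i y - l / 2 * (norm (x - y))\<^sup>2))) ` S)"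
proof -
  fix i0 :: 'm
  obtain r where r: "r > 0" "\<forall>y\<in>S. F i0 x - F i0 y \<le> 1 + norm (y - x) / r"
    using growth_bound[OF assms(1) assms(2) assms(3) assms(4)] by blast
  show ?thesis
  proof (rule bdd_aboveI2)
    fix y assume y: "y \<in> S"
    have "Min (range (\<lambda>i. F i x - F i y - l / 2 * (norm (x - y))\<^sup>2))
          \<le> F i0 x - F i0 y - l / 2 * (norm (x - y))\<^sup>2" by (rule Min_le) auto
    also have "\<dots> \<le> 1 + norm (y - x) / r - l / 2 * (norm (y - x))\<^sup>2"
      using r y norm_minus_commute[of x y] by force
    also have "\<dots> \<le> 1 + 1 / (2 * l * r^2)"
    proof -
      define d where "d = norm (y - x)"
      have "0 \<le> l / 2 * (d - 1 / (l * r))\<^sup>2" using assms(5) by simp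
      also have "\<dots> = l / 2 * d^2 - d / r + 1 / (2 * l * r^2)"
        using assms(5) r by (simp add: power2_eq_square field_simps)
      finally show ?thesis by (simp add: d_def)
    qed
    finally show "Min (range (\<lambda>i. F i x - F i y - l / 2 * (norm (x - y))\<^sup>2))
          \<le> 1 + 1 / (2 * l * r^2)" .
  qed
qed

theorem theorem3p3:
  fixes S :: "'n::euclidean_space set"
    and F :: "'m::finite \<Rightarrow> 'n \<Rightarrow> real"
    and l :: real
  assumes "S \<noteq> {}" and "closed S" and "convex S"
    and "\<And>i. convex_on S (F i)"
    and "\<And>i. continuous_on S (F i)"
    and "l > 0"
  shows "(\<forall>x\<in>S. u_merit S F l x \<ge> 0) \<and>
         (\<forall>x\<in>S. weakly_pareto_optimal S F x \<longleftrightarrow> u_merit S F l x = 0)"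
proof -
  have ge0: "u_merit S F l x \<ge> 0" if x: "x \<in> S" for x
  proof -
    have "Min (range (\<lambda>i. F i x - F i x - l / 2 * (norm (x - x))\<^sup>2)) = 0" by simp
    then show ?thesis unfolding u_merit_def
      using cSUP_upper[OF x bdd_merit[OF assms(3,4,5) x assms(6)]] by simp
  qed
  have iff: "weakly_pareto_optimal S F x \<longleftrightarrow> u_merit S F l x = 0" if x: "x \<in> S" for x
  proof
    assume w: "weakly_pareto_optimal S F x"
    have "u_merit S F l x \<le> 0" unfolding u_merit_def
    proof (rule cSUP_least[OF assms(1)])
      fix y assume y: "y \<in> S"
      then obtain i where i: "F i y \<ge> F i x" using w unfolding weakly_pareto_optimal_def
        by (meson not_le)
      have "Min (range (\<lambda>i. F i x - F i y - l / 2 * (norm (x - y))\<^sup>2))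
          \<le> F i x - F i y - l / 2 * (norm (x - y))\<^sup>2" by (rule Min_le) auto
      also have "\<dots> \<le> 0" using i assms(6)
        by (smt (verit) mult_nonneg_nonneg zero_le_power2 divide_nonneg_pos)
      finally show "Min (range (\<lambda>i. F i x - F i y - l / 2 * (norm (x - y))\<^sup>2)) \<le> 0" .
    qed
    with ge0[OF x] show "u_merit S F l x = 0" by simp
  next
    assume u0: "u_merit S F l x = 0"
    show "weakly_pareto_optimal S F x"
      unfolding weakly_pareto_optimal_def
    proof (intro conjI x notI)
      assume "\<exists>y\<in>S. \<forall>i. F i y < F i x"
      then obtain y where y: "y \<in> S" "\<And>i. F i y < F i x" by blast
      define \<delta> where "\<delta> = Min (range (\<lambda>i. F i x - F i y))"
      have \<delta>: "\<delta> > 0" unfolding \<delta>_def using y(2) by (subst Min_gr_iff) auto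
      have \<delta>le: "\<delta> \<le> F i x - F i y" for i unfolding \<delta>_def by (rule Min_le) auto
      define D where "D = norm (y - x)"
      have "y \<noteq> x" using y(2) by blast
      then have D: "D > 0" by (simp add: D_def)
      define t where "t = min 1 (\<delta> / (l * D^2))"
      have t: "0 < t" "t \<le> 1" "t * (l * D^2) \<le> \<delta>"
        using \<delta> D assms(6) by (auto simp: t_def min_def field_simps)
      define z where "z = (1 - t) *\<^sub>R x + t *\<^sub>R y"
      have zS: "z \<in> S" using assms(3) x y t unfolding z_def
        by (intro convexD) auto
      have "x - z = t *\<^sub>R (x - y)" by (simp add: z_def algebra_simps)
      then have nz: "norm (x - z) = t * D" using t by (simp add: D_def norm_minus_commute)
      have pos: "F i x - F i z - l / 2 * (norm (x - z))\<^sup>2 > 0" for i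
      proof -
        have "F i z \<le> (1 - t) * F i x + t * F i y"
          using convex_onD[OF assms(4), of t x y] t x y by (simp add: z_def)
        then have "F i x - F i z \<ge> t * (F i x - F i y)" by (simp add: algebra_simps)
        moreover have "t * (F i x - F i y) \<ge> t * \<delta>" using \<delta>le t by simp
        moreover have "l / 2 * (norm (x - z))\<^sup>2 = t / 2 * (t * (l * D^2))"
          by (simp add: nz power2_eq_square)
        moreover have "t / 2 * (t * (l * D^2)) \<le> t / 2 * \<delta>" using t
          by (intro mult_left_mono) auto
        moreover have "t * \<delta> > 0" using t \<delta> by simp
        ultimately show ?thesis by linarith
      qed
      have "0 < Min (range (\<lambda>i. F i x - F i z - l / 2 * (norm (x - z))\<^sup>2))"
        using pos by (subst Min_gr_iff) auto
      also have "\<dots> \<le> u_merit S F l x" unfolding u_merit_def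
        using cSUP_upper[OF zS bdd_merit[OF assms(3,4,5) x assms(6)]] by simp
      finally show False using u0 by simp
    qed
  qed
  show ?thesis using ge0 iff by blast
qed

end
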